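(* Let $\Sigma\in\mathbb{R}^{J\times J}$ be symmetric positive definite, let $\gamma_1>0$, $\gamma_2>0$, and fix $y\in\mathbb{R}^J$. Define the ambiguity sets \[ \mathcal{D}_{\tilde s}=\Bigl\{\mathbb{P}\in\mathcal{P}(\mathbb{R}^J):\ \mathbb{E}_{\mathbb{P}}[\tilde s]^{\top}\Sigma^{-1}\mathbb{E}_{\mathbb{P}}[\tilde s]\le\gamma_1,\ \ \mathbb{E}_{\mathbb{P}}[\tilde s\tilde s^{\top}]\preceq\gamma_2\Sigma\Bigr\} \] for a random vector $\tilde s$ in $\mathbb{R}^J$, and \[ \mathcal{D}_{\tilde\xi}=\Bigl\{\mathbb{P}\in\mathcal{P}(\mathbb{R}):\ |\mathbb{E}_{\mathbb{P}}[\tilde\xi]|\le\sqrt{\gamma_1}\sqrt{y^{\top}\Sigma y},\ \ \mathbb{E}_{\mathbb{P}}[\tilde\xi^2]\le\gamma_2\,(y^{\top}\Sigma y)\Bigr\} \] for a random variable $\tilde\xi$ in $\mathbb{R}$. Then for every Borel measurable function $f:\mathbb{R}\to\mathbb{R}$, \[ \inf_{\mathbb{P}\in\mathcal{D}_{\tilde s}}\mathbb{P}\{f(y^{\top}\tilde s)\le 0\}\ =\ \inf_{\mathbb{P}\in\mathcal{D}_{\tilde\xi}}\mathbb{P}\{f(\tilde\xi)\le 0\}. \]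
   Context: $\mathcal{P}(\mathbb{R}^n)$ denotes the set of all probability distributions on $\mathbb{R}^n$ (for which the relevant first and second moments exist); in $\mathcal{D}_{\tilde s}$, $\tilde s$ is distributed according to $\mathbb{P}$, and in $\mathcal{D}_{\tilde\xi}$, $\tilde\xi$ is distributed according to $\mathbb{P}$. $A\preceq B$ means $B-A$ is positive semidefinite. *)

theory Defs
  imports "HOL-Probability.Probability"
begin

definition sym_pd :: "real^'n^'n \<Rightarrow> bool" where
  "sym_pd S \<longleftrightarrow> transpose S = S \<and> (\<forall>v. v \<noteq> 0 \<longrightarrow> v \<bullet> (S *v v) > 0)"

definition loewner_le :: "real^'n^'n \<Rightarrow> real^'n^'n \<Rightarrow> bool" where
  "loewner_le A B \<longleftrightarrow> (\<forall>v. v \<bullet> ((B - A) *v v) \<ge> 0)"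

definition mean_vec :: "(real^'n) measure \<Rightarrow> real^'n" where
  "mean_vec M = (\<chi> i. integral\<^sup>L M (\<lambda>x. x $ i))"

definition second_moment :: "(real^'n) measure \<Rightarrow> real^'n^'n" where
  "second_moment M = (\<chi> i j. integral\<^sup>L M (\<lambda>x. x $ i * x $ j))"

definition prob_dists_vec :: "(real^'n) measure set" where
  "prob_dists_vec = {M. prob_space M \<and> sets M = sets borel \<and>
      (\<forall>i. integrable M (\<lambda>x. x $ i)) \<and> (\<forall>i j. integrable M (\<lambda>x. x $ i * x $ j))}"

definition prob_dists_real :: "real measure set" where
  "prob_dists_real = {M. prob_space M \<and> sets M = sets borel \<and>
      integrable M (\<lambda>x. x) \<and> integrable M (\<lambda>x. x ^ 2)}"

definition D_s :: "real^'n^'n \<Rightarrow> real \<Rightarrow> real \<Rightarrow> (real^'n) measure set" where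
  "D_s S g1 g2 = {M \<in> prob_dists_vec.
      mean_vec M \<bullet> (matrix_inv S *v mean_vec M) \<le> g1 \<and>
      loewner_le (second_moment M) (g2 *\<^sub>R S)}"

definition D_xi :: "real^'n^'n \<Rightarrow> real \<Rightarrow> real \<Rightarrow> real^'n \<Rightarrow> real measure set" where
  "D_xi S g1 g2 y = {M \<in> prob_dists_real.
      \<bar>integral\<^sup>L M (\<lambda>x. x)\<bar> \<le> sqrt g1 * sqrt (y \<bullet> (S *v y)) \<and>
      integral\<^sup>L M (\<lambda>x. x ^ 2) \<le> g2 * (y \<bullet> (S *v y))}"

end

theory Submission
  imports Defs
begin


lemma sym_form:
  fixes S :: "real^'n^'n"
  assumes "transpose S = S"
  shows "a \<bullet> (S *v b) = b \<bullet> (S *v a)"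
proof -
  have "a \<bullet> (S *v b) = (a v* S) \<bullet> b" by (simp add: dot_lmul_matrix)
  also have "a v* S = transpose S *v a" by simp
  finally show ?thesis using assms by (simp add: inner_commute)
qed

lemma cs_form:
  fixes S :: "real^'n^'n"
  assumes "sym_pd S"
  shows "(a \<bullet> (S *v b))^2 \<le> (a \<bullet> (S *v a)) * (b \<bullet> (S *v b))"
proof (cases "b = 0")
  case True then show ?thesis by simp
next
  case False
  have sym: "transpose S = S" and pd: "\<And>v. v \<noteq> 0 \<Longrightarrow> v \<bullet> (S *v v) > 0"
    using assms unfolding sym_pd_def by auto
  have psd: "\<And>v. v \<bullet> (S *v v) \<ge> 0"
    by (metis less_le matrix_vector_mult_0_right inner_zero_left order_refl pd)
  define B where "B = b \<bullet> (S *v b)"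
  have B: "B > 0" using pd False B_def by auto
  define t where "t = - (a \<bullet> (S *v b)) / B"
  have "0 \<le> (a + t *\<^sub>R b) \<bullet> (S *v (a + t *\<^sub>R b))" by (rule psd)
  also have "\<dots> = a \<bullet> (S *v a) + 2 * t * (a \<bullet> (S *v b)) + t^2 * B"
    using sym_form[OF sym, of b a]
    by (simp add: algebra_simps matrix_vector_mult_scaleR inner_add_left inner_add_right B_def power2_eq_square)
  also have "\<dots> = a \<bullet> (S *v a) - (a \<bullet> (S *v b))^2 / B"
    using B by (simp add: t_def field_simps power2_eq_square)
  finally have "(a \<bullet> (S *v b))^2 / B \<le> a \<bullet> (S *v a)" by simp
  then show ?thesis using B by (simp add: B_def field_simps)
qed

lemma pd_inv:
  fixes S :: "real^'n^'n"
  assumes "sym_pd S"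
  shows "matrix_inv S ** S = mat 1" "S ** matrix_inv S = mat 1"
proof -
  have pd: "\<And>v. v \<noteq> 0 \<Longrightarrow> v \<bullet> (S *v v) > 0"
    using assms unfolding sym_pd_def by auto
  have "\<forall>x. S *v x = 0 \<longrightarrow> x = 0"
    using pd by fastforce
  then have "invertible S"
    using matrix_left_invertible_ker invertible_left_inverse by blast
  then have "\<exists>A'. S ** A' = mat 1 \<and> A' ** S = mat 1" unfolding invertible_def by blast
  from someI_ex[OF this] show "matrix_inv S ** S = mat 1" "S ** matrix_inv S = mat 1"
    unfolding matrix_inv_def by auto
qed



lemma inner_sum_eq: "(y::real^'n) \<bullet> s = (\<Sum>i\<in>UNIV. y$i * s$i)"
  by (simp add: inner_vec_def)

lemma sq_sum_eq: "((y::real^'n) \<bullet> s)^2 = (\<Sum>i\<in>UNIV. \<Sum>j\<in>UNIV. y$i * y$j * (s$i * s$j))"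
  unfolding inner_sum_eq power2_eq_square sum_product by (simp add: mult_ac)

lemma dir1:
  fixes y :: "real^'n"
  assumes M: "M \<in> prob_dists_vec"
  shows "integrable M (\<lambda>s. y \<bullet> s)" "integral\<^sup>L M (\<lambda>s. y \<bullet> s) = y \<bullet> mean_vec M"
    "integrable M (\<lambda>s. (y \<bullet> s)^2)" "integral\<^sup>L M (\<lambda>s. (y \<bullet> s)^2) = y \<bullet> (second_moment M *v y)"
proof -
  have i1: "\<And>i. integrable M (\<lambda>x. x $ i)" and i2: "\<And>i j. integrable M (\<lambda>x. x $ i * x $ j)"
    using M unfolding prob_dists_vec_def by auto
  show "integrable M (\<lambda>s. y \<bullet> s)" unfolding inner_sum_eq using i1 by auto
  show "integral\<^sup>L M (\<lambda>s. y \<bullet> s) = y \<bullet> mean_vec M" unfolding inner_sum_eq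
    using i1 by (simp add: mean_vec_def)
  show "integrable M (\<lambda>s. (y \<bullet> s)^2)" unfolding sq_sum_eq using i2 by auto
  show "integral\<^sup>L M (\<lambda>s. (y \<bullet> s)^2) = y \<bullet> (second_moment M *v y)"
  proof -
    have "integral\<^sup>L M (\<lambda>s. \<Sum>i\<in>UNIV. \<Sum>j\<in>UNIV. y$i * y$j * (s$i * s$j))
       = (\<Sum>i\<in>UNIV. \<Sum>j\<in>UNIV. y$i * y$j * integral\<^sup>L M (\<lambda>s. s$i * s$j))"
      using i2 by (simp add: Bochner_Integration.integral_sum)
    also have "\<dots> = y \<bullet> (second_moment M *v y)"
      unfolding inner_sum_eq matrix_vector_mult_def second_moment_def
      by (simp add: sum_distrib_left mult_ac)
    finally show ?thesis by (simp only: sq_sum_eq[symmetric])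
  qed
qed



lemma d1:
  fixes S :: "real^'n^'n" and y :: "real^'n" and f :: "real \<Rightarrow> real"
  assumes S: "sym_pd S" and g1: "g1 > 0" and g2: "g2 > 0"
    and f: "f \<in> borel_measurable borel" and M: "M \<in> D_s S g1 g2"
  shows "\<exists>Q\<in>D_xi S g1 g2 y. measure Q {x. f x \<le> 0} = measure M {s. f (y \<bullet> s) \<le> 0}"
proof -
  have Mv: "M \<in> prob_dists_vec" and c1: "mean_vec M \<bullet> (matrix_inv S *v mean_vec M) \<le> g1"
    and c2: "loewner_le (second_moment M) (g2 *\<^sub>R S)" using M unfolding D_s_def by auto
  have ps: "prob_space M" and sM: "sets M = sets borel" using Mv unfolding prob_dists_vec_def by auto
  have spM: "space M = UNIV" using sets_eq_imp_space_eq[OF sM] by simp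
  have meas: "(\<lambda>s. y \<bullet> s) \<in> measurable M borel"
  proof -
    have "(\<lambda>s. y \<bullet> s) \<in> borel_measurable (borel :: (real^'n) measure)"
      by (intro borel_measurable_continuous_onI continuous_intros)
    then show ?thesis by (simp add: measurable_cong_sets[OF sM refl])
  qed
  define Q where "Q = distr M borel (\<lambda>s. y \<bullet> s)"
  note d = dir1[OF Mv, of y]
  have "prob_space Q" unfolding Q_def using prob_space.prob_space_distr[OF ps meas] .
  moreover have "sets Q = sets borel" unfolding Q_def by simp
  moreover have "integrable Q (\<lambda>x. x)" unfolding Q_def
    using integrable_distr_eq[OF meas, of "\<lambda>x. x"] d by simp
  moreover have "integrable Q (\<lambda>x. x^2)" unfolding Q_def
    using integrable_distr_eq[OF meas, of "\<lambda>x. x^2"] d by simp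
  moreover have e1: "integral\<^sup>L Q (\<lambda>x. x) = y \<bullet> mean_vec M" unfolding Q_def
    using integral_distr[OF meas, of "\<lambda>x. x"] d by simp
  moreover have e2: "integral\<^sup>L Q (\<lambda>x. x^2) = y \<bullet> (second_moment M *v y)" unfolding Q_def
    using integral_distr[OF meas, of "\<lambda>x. x^2"] d by simp
  moreover have "\<bar>y \<bullet> mean_vec M\<bar> \<le> sqrt g1 * sqrt (y \<bullet> (S *v y))"
  proof -
    define m where "m = mean_vec M"
    define w where "w = matrix_inv S *v m"
    have mw: "m = S *v w" unfolding w_def by (simp add: matrix_vector_mul_assoc pd_inv[OF S])
    have sym: "transpose S = S" using S unfolding sym_pd_def by auto
    have psd: "y \<bullet> (S *v y) \<ge> 0" using S unfolding sym_pd_def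
      by (cases "y = 0") (auto intro: less_imp_le)
    have a: "(y \<bullet> m)^2 \<le> (y \<bullet> (S *v y)) * (w \<bullet> (S *v w))"
      using cs_form[OF S, of y w] mw by simp
    have b: "w \<bullet> (S *v w) = m \<bullet> w" using mw by (simp add: inner_commute)
    have c: "m \<bullet> w \<le> g1" using c1 unfolding m_def w_def .
    have "(y \<bullet> m)^2 \<le> (y \<bullet> (S *v y)) * g1"
      using a b c mult_left_mono[of "m \<bullet> w" g1 "y \<bullet> (S *v y)"] psd by simp
    then have "sqrt ((y \<bullet> m)^2) \<le> sqrt ((y \<bullet> (S *v y)) * g1)" by (rule real_sqrt_le_mono)
    then show ?thesis unfolding m_def by (simp add: real_sqrt_mult mult.commute)
  qed
  moreover have "y \<bullet> (second_moment M *v y) \<le> g2 * (y \<bullet> (S *v y))"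
    using c2 unfolding loewner_le_def
    by (drule_tac x=y in spec) (simp add: algebra_simps scaleR_matrix_vector_assoc[symmetric])
  ultimately have "Q \<in> D_xi S g1 g2 y" unfolding D_xi_def prob_dists_real_def by auto
  moreover have "measure Q {x. f x \<le> 0} = measure M {s. f (y \<bullet> s) \<le> 0}"
    unfolding Q_def using f by (subst measure_distr[OF meas]) (auto simp: spM)
  ultimately show ?thesis by blast
qed



lemma quad_outer: "(v::real^'n) \<bullet> ((\<chi> i j. e * (u$i * u$j)) *v v) = e * (v \<bullet> u)^2"
  unfolding sq_sum_eq by (simp add: inner_vec_def matrix_vector_mult_def sum_distrib_left mult_ac)

lemma d2:
  fixes S :: "real^'n^'n" and y :: "real^'n" and f :: "real \<Rightarrow> real"
  assumes S: "sym_pd S" and g1: "g1 > 0" and g2: "g2 > 0"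
    and f: "f \<in> borel_measurable borel" and Q: "Q \<in> D_xi S g1 g2 y"
  shows "\<exists>M\<in>D_s S g1 g2. measure M {s. f (y \<bullet> s) \<le> 0} = measure Q {x. f x \<le> 0}"
proof -
  have Qr: "Q \<in> prob_dists_real"
    and c1: "\<bar>integral\<^sup>L Q (\<lambda>x. x)\<bar> \<le> sqrt g1 * sqrt (y \<bullet> (S *v y))"
    and c2: "integral\<^sup>L Q (\<lambda>x. x ^ 2) \<le> g2 * (y \<bullet> (S *v y))" using Q unfolding D_xi_def by auto
  have ps: "prob_space Q" and sQ: "sets Q = sets borel" and i1: "integrable Q (\<lambda>x. x)"
    and i2: "integrable Q (\<lambda>x. x^2)" using Qr unfolding prob_dists_real_def by auto
  have spQ: "space Q = UNIV" using sets_eq_imp_space_eq[OF sQ] by simp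
  have sym: "transpose S = S" and pd: "\<And>v. v \<noteq> 0 \<Longrightarrow> v \<bullet> (S *v v) > 0"
    using S unfolding sym_pd_def by auto
  have psd: "\<And>v. v \<bullet> (S *v v) \<ge> 0"
    by (metis less_le matrix_vector_mult_0_right inner_zero_left order_refl pd)
  define q where "q = y \<bullet> (S *v y)"
  define c where "c = 1 / q"
  define u where "u = c *\<^sub>R (S *v y)"
  define e1 where "e1 = integral\<^sup>L Q (\<lambda>x. x)"
  define e2 where "e2 = integral\<^sup>L Q (\<lambda>x. x^2)"
  have q0: "q \<ge> 0" unfolding q_def by (rule psd)
  have e2nn: "e2 \<ge> 0" unfolding e2_def by simp
  have meas: "(\<lambda>x. x *\<^sub>R u) \<in> measurable Q borel"
  proof -
    have "(\<lambda>x. x *\<^sub>R u) \<in> borel_measurable (borel :: real measure)"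
      by (intro borel_measurable_continuous_onI continuous_intros)
    then show ?thesis by (simp add: measurable_cong_sets[OF sQ refl])
  qed
  define M where "M = distr Q borel (\<lambda>x. x *\<^sub>R u)"
  have f1: "\<And>i. (\<lambda>x. (x *\<^sub>R u) $ i) = (\<lambda>x. u$i * x)" by (auto simp: mult.commute)
  have f2: "\<And>i j. (\<lambda>x. (x *\<^sub>R u) $ i * (x *\<^sub>R u) $ j) = (\<lambda>x. (u$i * u$j) * x^2)"
    by (auto simp: power2_eq_square mult_ac)
  have mc1: "\<And>i. (\<lambda>v::real^'n. v $ i) \<in> borel_measurable borel"
    by (intro borel_measurable_continuous_onI continuous_intros)
  have mc2: "\<And>i j. (\<lambda>v::real^'n. v $ i * v $ j) \<in> borel_measurable borel"
    by (intro borel_measurable_continuous_onI continuous_intros)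
  have ii1: "integrable M (\<lambda>v. v $ i)" for i
  proof -
    have "integrable Q (\<lambda>x. u$i * x)" using i1 by (rule integrable_mult_right)
    then have "integrable Q (\<lambda>x. (x *\<^sub>R u) $ i)" by (simp only: f1)
    then show ?thesis unfolding M_def by (simp only: integrable_distr_eq[OF meas mc1])
  qed
  have ii2: "integrable M (\<lambda>v. v $ i * v $ j)" for i j
  proof -
    have "integrable Q (\<lambda>x. (u$i * u$j) * x^2)" using i2 by (rule integrable_mult_right)
    then have "integrable Q (\<lambda>x. (x *\<^sub>R u) $ i * (x *\<^sub>R u) $ j)" by (simp only: f2)
    then show ?thesis unfolding M_def by (simp only: integrable_distr_eq[OF meas mc2])
  qed
  have mv: "mean_vec M = e1 *\<^sub>R u" unfolding mean_vec_def M_def e1_def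
    by (simp add: vec_eq_iff integral_distr[OF meas mc1] f1)
  have sm: "second_moment M = (\<chi> i j. e2 * (u$i * u$j))"
  proof -
    have "integral\<^sup>L Q (\<lambda>x. (x *\<^sub>R u) $ i * (x *\<^sub>R u) $ j) = e2 * (u$i * u$j)" for i j
      unfolding f2 e2_def by (simp add: mult.commute)
    then have "second_moment M $ i $ j = e2 * (u$i * u$j)" for i j unfolding second_moment_def M_def
      by (simp only: integral_distr[OF meas mc2] vec_lambda_beta)
    then show ?thesis by (simp add: vec_eq_iff)
  qed
  have "M \<in> prob_dists_vec" unfolding prob_dists_vec_def using ii1 ii2
    prob_space.prob_space_distr[OF ps meas] by (simp add: M_def)
  moreover have "mean_vec M \<bullet> (matrix_inv S *v mean_vec M) \<le> g1"
  proof -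
    have "matrix_inv S *v (S *v y) = y" by (simp add: matrix_vector_mul_assoc pd_inv[OF S])
    then have "mean_vec M \<bullet> (matrix_inv S *v mean_vec M) = e1^2 * c^2 * q"
      unfolding mv u_def q_def by (simp add: matrix_vector_mult_scaleR power2_eq_square inner_commute)
    also have "\<dots> \<le> g1"
    proof (cases "q = 0")
      case True then show ?thesis using g1 by simp
    next
      case False
      then have qp: "q > 0" using q0 by simp
      have "\<bar>e1\<bar> \<le> sqrt (g1 * q)" using c1 unfolding e1_def q_def by (simp add: real_sqrt_mult)
      then have "\<bar>e1\<bar>^2 \<le> (sqrt (g1 * q))^2" by (intro power_mono) auto
      then have "e1^2 \<le> g1 * q" using g1 qp by simp
      then show ?thesis using qp by (simp add: c_def field_simps power2_eq_square)
    qed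
    finally show ?thesis .
  qed
  moreover have "loewner_le (second_moment M) (g2 *\<^sub>R S)"
    unfolding loewner_le_def
  proof
    fix v :: "real^'n"
    have vu: "v \<bullet> u = c * (v \<bullet> (S *v y))" unfolding u_def by simp
    have cs: "(v \<bullet> (S *v y))^2 \<le> (v \<bullet> (S *v v)) * q" using cs_form[OF S, of v y] unfolding q_def .
    have "e2 * (v \<bullet> u)^2 \<le> g2 * (v \<bullet> (S *v v))"
    proof (cases "q = 0")
      case True then show ?thesis using g2 psd[of v] by (simp add: vu c_def)
    next
      case False
      then have qp: "q > 0" using q0 by simp
      have "e2 * (v \<bullet> u)^2 = e2 * c^2 * (v \<bullet> (S *v y))^2" by (simp add: vu power_mult_distrib)
      also have "\<dots> \<le> e2 * c^2 * ((v \<bullet> (S *v v)) * q)"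
        using cs e2nn by (intro mult_left_mono) auto
      also have "\<dots> = (e2 / q) * (v \<bullet> (S *v v))" using qp by (simp add: c_def field_simps power2_eq_square)
      also have "\<dots> \<le> g2 * (v \<bullet> (S *v v))"
      proof -
        have "e2 \<le> g2 * q" using c2 unfolding e2_def q_def .
        then have "e2 / q \<le> g2" using qp by (simp add: divide_le_eq)
        then show ?thesis using psd[of v] by (rule mult_right_mono)
      qed
      finally show ?thesis .
    qed
    moreover have "v \<bullet> ((g2 *\<^sub>R S - second_moment M) *v v) = g2 * (v \<bullet> (S *v v)) - e2 * (v \<bullet> u)^2"
      unfolding matrix_vector_mult_diff_rdistrib inner_diff_right scaleR_matrix_vector_assoc[symmetric] sm quad_outer
      by simp
    ultimately show "0 \<le> v \<bullet> ((g2 *\<^sub>R S - second_moment M) *v v)" by simp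
  qed
  ultimately have MD: "M \<in> D_s S g1 g2" unfolding D_s_def by auto
  have "measure M {s. f (y \<bullet> s) \<le> 0} = measure Q {x. f (x * (y \<bullet> u)) \<le> 0}"
    unfolding M_def using f by (subst measure_distr[OF meas]) (auto simp: spQ)
  also have "\<dots> = measure Q {x. f x \<le> 0}"
  proof (cases "q = 0")
    case False
    then have "y \<bullet> u = 1" unfolding u_def c_def q_def by simp
    then show ?thesis by simp
  next
    case True
    have "y = 0"
    proof (rule ccontr)
      assume "y \<noteq> 0" then have "q > 0" using pd unfolding q_def by blast
      then show False using True by simp
    qed
    have "e2 = 0" using c2 e2nn True unfolding e2_def q_def by simp
    then have "AE x in Q. x^2 = 0" unfolding e2_def using integral_nonneg_eq_0_iff_AE[OF i2] by simp
    then have "AE x in Q. x \<in> {x. f (x * (y \<bullet> u)) \<le> 0} \<longleftrightarrow> x \<in> {x. f x \<le> 0}"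
      by (rule eventually_mono) (simp add: \<open>y = 0\<close>)
    moreover have "{x. f (x * (y \<bullet> u)) \<le> 0} \<in> sets Q" "{x. f x \<le> 0} \<in> sets Q"
      using f unfolding sQ by measurable
    ultimately show ?thesis by (rule measure_eq_AE)
  qed
  finally show ?thesis using MD by blast
qed



theorem lemma1:
  fixes S :: "real^'n^'n" and g1 g2 :: real and y :: "real^'n" and f :: "real \<Rightarrow> real"
  assumes "sym_pd S" and "g1 > 0" and "g2 > 0"
    and "f \<in> borel_measurable borel"
  shows "(INF M \<in> D_s S g1 g2. measure M {s. f (y \<bullet> s) \<le> 0})
       = (INF M \<in> D_xi S g1 g2 y. measure M {x. f x \<le> 0})"
proof -
  have "(\<lambda>M. measure M {s. f (y \<bullet> s) \<le> 0}) ` D_s S g1 g2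
      = (\<lambda>M. measure M {x. f x \<le> 0}) ` D_xi S g1 g2 y"
  proof
    show "(\<lambda>M. measure M {s. f (y \<bullet> s) \<le> 0}) ` D_s S g1 g2
      \<subseteq> (\<lambda>M. measure M {x. f x \<le> 0}) ` D_xi S g1 g2 y"
      using d1[OF assms] by (force simp: image_iff)
    show "(\<lambda>M. measure M {x. f x \<le> 0}) ` D_xi S g1 g2 y
      \<subseteq> (\<lambda>M. measure M {s. f (y \<bullet> s) \<le> 0}) ` D_s S g1 g2"
      using d2[OF assms] by (force simp: image_iff)
  qed
  then show ?thesis by simp
qed

end
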